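(* Let $\mathcal R$ be a DCTRS and let $\langle s,\pi\rangle$, $\langle t,\pi'\rangle$ be safe pairs. For all $k,m\ge0$: $\langle s,\pi\rangle\rightharpoonup_{\mathcal R_k}^{m}\langle t,\pi'\rangle$ if and only if $\langle t,\pi'\rangle\leftharpoondown_{\mathcal R_k}^{m}\langle s,\pi\rangle$.
   Context: Terms $\mathcal T(\mathcal F,\mathcal V)$; $\mathrm{Pos}(t)$ positions ($\epsilon$ root), $t|_p$ subterm, $t[u]_p$ replacement, $\mathrm{Var}(t_1,\dots,t_n)$ the variables occurring in the $t_i$, $\mathrm{Dom}(\sigma)=\{x\mid x\sigma\ne x\}$, $\sigma|_V$ restriction. A DCTRS $\mathcal R$ is a finite set of labelled conditional rules $\beta: l\to r\Leftarrow s_1\twoheadrightarrow t_1,\dots,s_n\twoheadrightarrow t_n$ ($l\notin\mathcal V$) with $\mathrm{Var}(r)\subseteq\mathrm{Var}(l,s_1,\dots,s_n,t_1,\dots,t_n)$ and $\mathrm{Var}(s_i)\subseteq\mathrm{Var}(l,t_1,\dots,t_{i-1})$ for all $i$; labels are unique and rule variables are never renamed. For such a rule let $V_\beta=(\mathrm{Var}(l)\setminus\mathrm{Var}(r,s_1,\dots,s_n,t_1,\dots,t_n))\cup\bigcup_{i=1}^n(\mathrm{Var}(t_i)\setminus\mathrm{Var}(r,s_{i+1},\dots,s_n))$. Traces: $[\,]$ is a trace, and if $\pi,\pi_1,\dots,\pi_n$ are traces, $\beta$ labels a rule with $n$ conditions, $p$ is a position and $\sigma$ a ground substitution, then $\beta(p,\sigma,\pi_1,\dots,\pi_n):\pi$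 is a trace. A trace $\pi$ is safe iff for every trace term $\beta(p,\sigma,\pi_1,\dots,\pi_n)$ in $\pi$, $\sigma$ is ground with $\mathrm{Dom}(\sigma)=V_\beta$ and $\pi_1,\dots,\pi_n$ are safe; $\langle s,\pi\rangle$ ($s$ ground) is safe iff $\pi$ is. Depth-indexed relations on safe pairs: $\rightharpoonup_{\mathcal R_0}$ and $\leftharpoondown_{\mathcal R_0}$ are empty. $\langle s,\pi\rangle\rightharpoonup_{\mathcal R_{k+1}}\langle t,\beta(p,\sigma',\pi_1,\dots,\pi_n):\pi\rangle$ iff there are $p\in\mathrm{Pos}(s)$, rule $\beta$ and ground $\sigma$ with $s|_p=l\sigma$, $\langle s_i\sigma,[\,]\rangle\rightharpoonup_{\mathcal R_k}^{*}\langle t_i\sigma,\pi_i\rangle$ for all $i$, $t=s[r\sigma]_p$, $\sigma'=\sigma|_{V_\beta}$. $\langle t,\beta(p,\sigma',\pi_1,\dots,\pi_n):\pi\rangle\leftharpoondown_{\mathcal R_{k+1}}\langle s,\pi\rangle$ iff this pair is safe, $\beta: l\to r\Leftarrow s_1\twoheadrightarrow t_1,\dots,s_n\twoheadrightarrow t_n\in\mathcal R$, and there is a ground $\theta$ with $\mathrm{Dom}(\theta)=\mathrm{Var}(r,s_1,\dots,s_n)\setminus\mathrm{Dom}(\sigma')$, $t|_p=r\theta$, $\langle t_i\theta\sigma',\pi_i\rangle\leftharpoondown_{\mathcal R_k}^{*}\langle s_i\theta\sigma',[\,]\rangle$ for all $i$, and $s=t[l\theta\sigma']_p$. ($\rightharpoonup_{\mathcal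 R}=\bigcup_k\rightharpoonup_{\mathcal R_k}$, $\leftharpoondown_{\mathcal R}=\bigcup_k\leftharpoondown_{\mathcal R_k}$.) $\to^{m}$ denotes exactly $m$ steps. *)

theory Defs
  imports Main
begin

datatype ('f, 'v) "term" = Var 'v | Fun 'f "('f, 'v) term list"

type_synonym pos = "nat list"

fun vars_term :: "('f, 'v) term \<Rightarrow> 'v set" where
  "vars_term (Var x) = {x}"
| "vars_term (Fun f ts) = (\<Union>t \<in> set ts. vars_term t)"

definition ground :: "('f, 'v) term \<Rightarrow> bool" where
  "ground t \<longleftrightarrow> vars_term t = {}"

function poss :: "('f, 'v) term \<Rightarrow> pos set" where
  "poss (Var x) = {[]}"
| "poss (Fun f ts) = {[]} \<union> (\<Union>(i, t) \<in> set (zip [0..<length ts] ts). (\<lambda>p. i # p) ` poss t)"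
  by pat_completeness auto
termination
  by (relation "measure size") (auto dest!: set_zip_rightD simp: less_Suc_eq_le intro: size_list_estimation')

fun subt_at :: "('f, 'v) term \<Rightarrow> pos \<Rightarrow> ('f, 'v) term" where
  "subt_at t [] = t"
| "subt_at (Fun f ts) (i # p) = (if i < length ts then subt_at (ts ! i) p else Fun f ts)"
| "subt_at (Var x) (i # p) = Var x"

fun replace_at :: "('f, 'v) term \<Rightarrow> pos \<Rightarrow> ('f, 'v) term \<Rightarrow> ('f, 'v) term" where
  "replace_at t [] u = u"
| "replace_at (Fun f ts) (i # p) u =
     (if i < length ts then Fun f (ts[i := replace_at (ts ! i) p u]) else Fun f ts)"
| "replace_at (Var x) (i # p) u = Var x"

type_synonym ('f, 'v) subst = "'v \<Rightarrow> ('f, 'v) term"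

fun subst_apply :: "('f, 'v) term \<Rightarrow> ('f, 'v) subst \<Rightarrow> ('f, 'v) term" (infixl "\<cdot>" 67) where
  "Var x \<cdot> \<sigma> = \<sigma> x"
| "Fun f ts \<cdot> \<sigma> = Fun f (map (\<lambda>t. t \<cdot> \<sigma>) ts)"

definition subst_dom :: "('f, 'v) subst \<Rightarrow> 'v set" where
  "subst_dom \<sigma> = {x. \<sigma> x \<noteq> Var x}"

definition subst_restrict :: "('f, 'v) subst \<Rightarrow> 'v set \<Rightarrow> ('f, 'v) subst" where
  "subst_restrict \<sigma> V = (\<lambda>x. if x \<in> V then \<sigma> x else Var x)"

definition ground_subst :: "('f, 'v) subst \<Rightarrow> bool" where
  "ground_subst \<sigma> \<longleftrightarrow> (\<forall>x \<in> subst_dom \<sigma>. ground (\<sigma> x))"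

text \<open>A conditional rule l -> r <= s1 ->> t1, ..., sn ->> tn.\<close>
record ('f, 'v) crule =
  lhs :: "('f, 'v) term"
  rhs :: "('f, 'v) term"
  conds :: "(('f, 'v) term \<times> ('f, 'v) term) list"

definition vars_terms :: "('f, 'v) term list \<Rightarrow> 'v set" where
  "vars_terms ts = (\<Union>t \<in> set ts. vars_term t)"

definition dctrs_rule :: "('f, 'v) crule \<Rightarrow> bool" where
  "dctrs_rule \<rho> \<longleftrightarrow>
     (\<forall>x. lhs \<rho> \<noteq> Var x) \<and>
     vars_term (rhs \<rho>) \<subseteq> vars_terms (lhs \<rho> # map fst (conds \<rho>) @ map snd (conds \<rho>)) \<and>
     (\<forall>i < length (conds \<rho>).
        vars_term (fst (conds \<rho> ! i)) \<subseteq> vars_terms (lhs \<rho> # map snd (take i (conds \<rho>))))"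

definition dctrs :: "('l \<times> ('f, 'v) crule) set \<Rightarrow> bool" where
  "dctrs R \<longleftrightarrow> finite R \<and>
     (\<forall>\<beta> \<rho> \<rho>'. (\<beta>, \<rho>) \<in> R \<longrightarrow> (\<beta>, \<rho>') \<in> R \<longrightarrow> \<rho> = \<rho>') \<and>
     (\<forall>(\<beta>, \<rho>) \<in> R. dctrs_rule \<rho>)"

definition V_rule :: "('f, 'v) crule \<Rightarrow> 'v set" where
  "V_rule \<rho> = (let cs = conds \<rho>; n = length cs in
     (vars_term (lhs \<rho>) - vars_terms (rhs \<rho> # map fst cs @ map snd cs)) \<union>
     (\<Union>i < n. vars_term (snd (cs ! i)) - vars_terms (rhs \<rho> # map fst (drop (Suc i) cs))))"

text \<open>A trace term beta(p, sigma, pi_1, ..., pi_n); a trace is a list of trace terms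
  (the empty list is the empty trace, and "tt : pi" is list cons).\<close>
datatype ('l, 'f, 'v) trace_term =
  TT 'l pos "('f, 'v) subst" "('l, 'f, 'v) trace_term list list"

type_synonym ('l, 'f, 'v) trace = "('l, 'f, 'v) trace_term list"

fun safe_tt :: "('l \<times> ('f, 'v) crule) set \<Rightarrow> ('l, 'f, 'v) trace_term \<Rightarrow> bool" where
  "safe_tt R (TT \<beta> p \<sigma> \<pi>s) \<longleftrightarrow>
     (\<exists>\<rho>. (\<beta>, \<rho>) \<in> R \<and> length \<pi>s = length (conds \<rho>) \<and>
          ground_subst \<sigma> \<and> subst_dom \<sigma> = V_rule \<rho>) \<and>
     (\<forall>\<pi> \<in> set \<pi>s. \<forall>t \<in> set \<pi>. safe_tt R t)"

definition safe_trace :: "('l \<times> ('f, 'v) crule) set \<Rightarrow> ('l, 'f, 'v) trace \<Rightarrow> bool" where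
  "safe_trace R \<pi> \<longleftrightarrow> (\<forall>t \<in> set \<pi>. safe_tt R t)"

type_synonym ('l, 'f, 'v) tpair = "('f, 'v) term \<times> ('l, 'f, 'v) trace"

definition safe_pair :: "('l \<times> ('f, 'v) crule) set \<Rightarrow> ('l, 'f, 'v) tpair \<Rightarrow> bool" where
  "safe_pair R sp \<longleftrightarrow> ground (fst sp) \<and> safe_trace R (snd sp)"

fun fwd :: "('l \<times> ('f, 'v) crule) set \<Rightarrow> nat \<Rightarrow> (('l, 'f, 'v) tpair \<times> ('l, 'f, 'v) tpair) set" where
  "fwd R 0 = {}"
| "fwd R (Suc k) = {((s, \<pi>), (t, TT \<beta> p \<sigma>' \<pi>s # \<pi>)) | s \<pi> t \<beta> p \<sigma>' \<pi>s.
     safe_pair R (s, \<pi>) \<and> safe_pair R (t, TT \<beta> p \<sigma>' \<pi>s # \<pi>) \<and>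
     (\<exists>\<rho> \<sigma>. (\<beta>, \<rho>) \<in> R \<and> p \<in> poss s \<and> ground_subst \<sigma> \<and>
        subt_at s p = lhs \<rho> \<cdot> \<sigma> \<and>
        length \<pi>s = length (conds \<rho>) \<and>
        (\<forall>i < length (conds \<rho>).
           ((fst (conds \<rho> ! i) \<cdot> \<sigma>, []), (snd (conds \<rho> ! i) \<cdot> \<sigma>, \<pi>s ! i)) \<in> (fwd R k)\<^sup>*) \<and>
        t = replace_at s p (rhs \<rho> \<cdot> \<sigma>) \<and>
        \<sigma>' = subst_restrict \<sigma> (V_rule \<rho>))}"

fun bwd :: "('l \<times> ('f, 'v) crule) set \<Rightarrow> nat \<Rightarrow> (('l, 'f, 'v) tpair \<times> ('l, 'f, 'v) tpair) set" where
  "bwd R 0 = {}"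
| "bwd R (Suc k) = {((t, TT \<beta> p \<sigma>' \<pi>s # \<pi>), (s, \<pi>)) | t \<beta> p \<sigma>' \<pi>s \<pi> s.
     safe_pair R (t, TT \<beta> p \<sigma>' \<pi>s # \<pi>) \<and> safe_pair R (s, \<pi>) \<and>
     (\<exists>\<rho> \<theta>. (\<beta>, \<rho>) \<in> R \<and> length \<pi>s = length (conds \<rho>) \<and>
        ground_subst \<theta> \<and>
        subst_dom \<theta> = vars_terms (rhs \<rho> # map fst (conds \<rho>)) - subst_dom \<sigma>' \<and>
        p \<in> poss t \<and> subt_at t p = rhs \<rho> \<cdot> \<theta> \<and>
        (\<forall>i < length (conds \<rho>).
           ((snd (conds \<rho> ! i) \<cdot> \<theta> \<cdot> \<sigma>', \<pi>s ! i), (fst (conds \<rho> ! i) \<cdot> \<theta> \<cdot> \<sigma>', [])) \<in> (bwd R k)\<^sup>*) \<and>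
        s = replace_at t p (lhs \<rho> \<cdot> \<theta> \<cdot> \<sigma>'))}"

end

theory Submission imports Defs begin

lemma relpow_conv: "(x,y) \<in> ((r::('a \<times> 'a) set)\<inverse>) ^^ m \<longleftrightarrow> (y,x) \<in> r ^^ m"
proof (induction m arbitrary: x y)
  case 0 then show ?case by auto
next
  case (Suc m)
  show ?case
  proof
    assume "(x,y) \<in> (r\<inverse>) ^^ Suc m"
    then obtain z where "(x,z) \<in> (r\<inverse>) ^^ m" "(z,y) \<in> r\<inverse>" by (blast elim: relpow_Suc_E)
    then show "(y,x) \<in> r ^^ Suc m" using Suc by (meson converse_iff relpow_Suc_I2)
  next
    assume "(y,x) \<in> r ^^ Suc m"
    then obtain z where "(y,z) \<in> r" "(z,x) \<in> r ^^ m" by (blast elim: relpow_Suc_E2)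
    then show "(x,y) \<in> (r\<inverse>) ^^ Suc m" using Suc by (auto intro: relpow_Suc_I)
  qed
qed

lemma subst_comp: "t \<cdot> \<theta> \<cdot> \<sigma> = t \<cdot> (\<lambda>x. \<theta> x \<cdot> \<sigma>)"
  by (induction t) auto

lemma subst_agree: "(\<And>x. x \<in> vars_term t \<Longrightarrow> \<sigma> x = \<tau> x) \<Longrightarrow> t \<cdot> \<sigma> = t \<cdot> \<tau>"
  by (induction t) auto

lemma ground_subst_id: "ground t \<Longrightarrow> t \<cdot> \<sigma> = t"
  unfolding ground_def
proof (induction t)
  case (Fun f ts) then show ?case by (auto intro: map_idI)
qed auto

lemma vars_subst: "vars_term (t \<cdot> \<sigma>) = (\<Union>x \<in> vars_term t. vars_term (\<sigma> x))"
  by (induction t) auto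

lemma ground_apply: "ground_subst \<sigma> \<Longrightarrow> ground (t \<cdot> \<sigma>) \<longleftrightarrow> vars_term t \<subseteq> subst_dom \<sigma>"
proof
  assume G: "ground_subst \<sigma>"
  { assume H: "ground (t \<cdot> \<sigma>)"
    show "vars_term t \<subseteq> subst_dom \<sigma>"
      unfolding subst_dom_def
    proof (intro subsetI CollectI notI)
      fix x assume "x \<in> vars_term t" "\<sigma> x = Var x"
      then show False using H unfolding ground_def vars_subst by force
    qed }
  { assume "vars_term t \<subseteq> subst_dom \<sigma>"
    then show "ground (t \<cdot> \<sigma>)" using G
      unfolding ground_def ground_subst_def vars_subst by blast }
qed

lemma poss_Fun: "i # q \<in> poss (Fun f ts) \<longleftrightarrow> i < length ts \<and> q \<in> poss (ts ! i)"
  by (force simp: in_set_zip)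

lemma Nil_poss[simp]: "[] \<in> poss t"
  by (cases t) auto

declare poss.simps(2)[simp del] poss_Fun[simp]

lemma subt_replace: "p \<in> poss s \<Longrightarrow> subt_at (replace_at s p u) p = u"
proof (induction s p u rule: replace_at.induct)
  case (2 f ts i p u) then show ?case by (auto simp: poss_Fun)
qed auto

lemma poss_replace: "p \<in> poss s \<Longrightarrow> p \<in> poss (replace_at s p u)"
proof (induction s p u rule: replace_at.induct)
  case (2 f ts i p u) then show ?case by (auto simp: poss_Fun)
qed auto

lemma replace_replace: "p \<in> poss s \<Longrightarrow> replace_at (replace_at s p u) p v = replace_at s p v"
proof (induction s p u rule: replace_at.induct)
  case (2 f ts i p u) then show ?case by (auto simp: poss_Fun)
qed auto

lemma replace_subt: "p \<in> poss s \<Longrightarrow> replace_at s p (subt_at s p) = s"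
proof (induction s p arbitrary: rule: subt_at.induct)
  case (2 f ts i p) then show ?case by (auto simp: poss_Fun)
qed auto

lemma vars_subt: "p \<in> poss s \<Longrightarrow> vars_term (subt_at s p) \<subseteq> vars_term s"
proof (induction s p rule: subt_at.induct)
  case (2 f ts i p) then show ?case by (auto simp: poss_Fun) (meson nth_mem subsetD)
qed auto

lemma ground_subt: "ground s \<Longrightarrow> p \<in> poss s \<Longrightarrow> ground (subt_at s p)"
  using vars_subt unfolding ground_def by blast


lemma V_rhs: "x \<in> vars_term (rhs \<rho>) \<Longrightarrow> x \<notin> V_rule \<rho>"
  unfolding V_rule_def Let_def vars_terms_def by auto

lemma V_snd: "i < length (conds \<rho>) \<Longrightarrow> x \<in> vars_term (snd (conds \<rho> ! i)) \<Longrightarrow> x \<notin> V_rule \<rho>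
  \<Longrightarrow> x \<in> vars_terms (rhs \<rho> # map fst (conds \<rho>))"
  unfolding V_rule_def Let_def vars_terms_def
  by (auto dest: in_set_dropD)

lemma V_lhs: "x \<in> vars_term (lhs \<rho>) \<Longrightarrow> x \<notin> V_rule \<rho>
  \<Longrightarrow> x \<in> vars_terms (rhs \<rho> # map fst (conds \<rho>)) \<or> (\<exists>i < length (conds \<rho>). x \<in> vars_term (snd (conds \<rho> ! i)))"
  unfolding V_rule_def Let_def vars_terms_def
  by (auto simp: in_set_conv_nth) (metis snd_conv)

lemma fwd_safe: "(a,b) \<in> fwd R k \<Longrightarrow> safe_pair R b"
  by (cases k) auto

lemma star_ground: "(a,b) \<in> (fwd R k)\<^sup>* \<Longrightarrow> ground (fst a) \<Longrightarrow> ground (fst b)"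
  by (induction rule: rtrancl_induct) (auto dest: fwd_safe simp: safe_pair_def)

lemma cond_ground:
  assumes "dctrs_rule \<rho>" "ground_subst \<sigma>" "vars_term (lhs \<rho>) \<subseteq> subst_dom \<sigma>"
   "\<forall>i<length (conds \<rho>). ((fst (conds \<rho> ! i) \<cdot> \<sigma>, []), (snd (conds \<rho> ! i) \<cdot> \<sigma>, \<pi>s ! i)) \<in> (fwd R k)\<^sup>*"
  shows "i < length (conds \<rho>) \<Longrightarrow> vars_term (fst (conds \<rho> ! i)) \<subseteq> subst_dom \<sigma> \<and> vars_term (snd (conds \<rho> ! i)) \<subseteq> subst_dom \<sigma>"
proof (induction i rule: less_induct)
  case (less i)
  have "vars_term (fst (conds \<rho> ! i)) \<subseteq> vars_terms (lhs \<rho> # map snd (take i (conds \<rho>)))"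
    using assms(1) less.prems by (auto simp: dctrs_rule_def)
  also have "\<dots> \<subseteq> subst_dom \<sigma>"
  proof
    fix x assume "x \<in> vars_terms (lhs \<rho> # map snd (take i (conds \<rho>)))"
    then have "x \<in> vars_term (lhs \<rho>) \<or> (\<exists>j<i. x \<in> vars_term (snd (conds \<rho> ! j)))"
      unfolding vars_terms_def by (force simp: in_set_conv_nth)
    then show "x \<in> subst_dom \<sigma>" using less.IH less.prems assms(3) by force
  qed
  finally have A: "vars_term (fst (conds \<rho> ! i)) \<subseteq> subst_dom \<sigma>" .
  then have "ground (fst (conds \<rho> ! i) \<cdot> \<sigma>)" using ground_apply assms(2) by blast
  then have "ground (snd (conds \<rho> ! i) \<cdot> \<sigma>)" using star_ground assms(4) less.prems by fastforce
  then show ?case using A ground_apply assms(2) by blast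
qed


lemma safe_dom:
  assumes D: "dctrs R" and S: "safe_pair R (t, TT \<beta> p \<sigma>' \<pi>s # \<pi>)" and R: "(\<beta>, \<rho>) \<in> R"
  shows "subst_dom \<sigma>' = V_rule \<rho> \<and> ground_subst \<sigma>'"
proof -
  from S have "safe_tt R (TT \<beta> p \<sigma>' \<pi>s)" by (simp add: safe_pair_def safe_trace_def)
  then obtain \<rho>' where "(\<beta>, \<rho>') \<in> R" "ground_subst \<sigma>'" "subst_dom \<sigma>' = V_rule \<rho>'" by auto
  moreover have "\<rho>' = \<rho>" using D R \<open>(\<beta>, \<rho>') \<in> R\<close> unfolding dctrs_def by blast
  ultimately show ?thesis by simp
qed

lemma fwd_bwd:
  assumes D: "dctrs R" and IH: "fwd R k = (bwd R k)\<inverse>"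
  and F: "((s,\<pi>),(t,\<pi>2)) \<in> fwd R (Suc k)"
  shows "((t,\<pi>2),(s,\<pi>)) \<in> bwd R (Suc k)"
proof -
  from F obtain \<beta> p \<sigma>' \<pi>s \<rho> \<sigma> where \<pi>2: "\<pi>2 = TT \<beta> p \<sigma>' \<pi>s # \<pi>" and S1: "safe_pair R (s,\<pi>)"
    and S2: "safe_pair R (t, TT \<beta> p \<sigma>' \<pi>s # \<pi>)" and R: "(\<beta>,\<rho>) \<in> R" and P: "p \<in> poss s"
    and G: "ground_subst \<sigma>" and L: "subt_at s p = lhs \<rho> \<cdot> \<sigma>" and len: "length \<pi>s = length (conds \<rho>)"
    and C: "\<forall>i < length (conds \<rho>).
           ((fst (conds \<rho> ! i) \<cdot> \<sigma>, []), (snd (conds \<rho> ! i) \<cdot> \<sigma>, \<pi>s ! i)) \<in> (fwd R k)\<^sup>*"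
    and T: "t = replace_at s p (rhs \<rho> \<cdot> \<sigma>)" and Sig': "\<sigma>' = subst_restrict \<sigma> (V_rule \<rho>)"
    by auto
  have dom': "subst_dom \<sigma>' = V_rule \<rho>" using safe_dom[OF D S2 R] by simp
  define V where "V = V_rule \<rho>"
  define W where "W = vars_terms (rhs \<rho> # map fst (conds \<rho>)) - V"
  define \<theta> where "\<theta> = subst_restrict \<sigma> W"
  have gs: "ground s" using S1 by (simp add: safe_pair_def)
  have gt: "ground t" using S2 by (simp add: safe_pair_def)
  have lv: "vars_term (lhs \<rho>) \<subseteq> subst_dom \<sigma>"
    using ground_subt[OF gs P] L ground_apply[OF G] by simp
  have pt: "p \<in> poss t" using T P poss_replace by blast
  have rt: "subt_at t p = rhs \<rho> \<cdot> \<sigma>" using T P subt_replace by blast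
  have rv: "vars_term (rhs \<rho>) \<subseteq> subst_dom \<sigma>"
    using ground_subt[OF gt pt] rt ground_apply[OF G] by simp
  have DR: "dctrs_rule \<rho>" using D R unfolding dctrs_def by blast
  have cv: "\<And>i. i < length (conds \<rho>) \<Longrightarrow> vars_term (fst (conds \<rho> ! i)) \<subseteq> subst_dom \<sigma> \<and> vars_term (snd (conds \<rho> ! i)) \<subseteq> subst_dom \<sigma>"
    using cond_ground[OF DR G lv C] by blast
  have Wsub: "W \<subseteq> subst_dom \<sigma>"
  proof
    fix x assume "x \<in> W"
    then have "x \<in> vars_term (rhs \<rho>) \<or> (\<exists>i < length (conds \<rho>). x \<in> vars_term (fst (conds \<rho> ! i)))"
      unfolding W_def vars_terms_def by (auto simp: in_set_conv_nth) (metis fst_conv)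
    then show "x \<in> subst_dom \<sigma>" using rv cv by blast
  qed
  have dom\<theta>: "subst_dom \<theta> = W" using Wsub unfolding \<theta>_def subst_restrict_def subst_dom_def by auto
  have g\<theta>: "ground_subst \<theta>" using G unfolding \<theta>_def subst_restrict_def ground_subst_def subst_dom_def by auto
  have K: "\<And>x. x \<in> V \<or> x \<in> W \<Longrightarrow> \<theta> x \<cdot> \<sigma>' = \<sigma> x"
  proof -
    fix x assume "x \<in> V \<or> x \<in> W"
    show "\<theta> x \<cdot> \<sigma>' = \<sigma> x"
    proof (cases "x \<in> W")
      case True
      then have "ground (\<sigma> x)" using Wsub G unfolding ground_subst_def by blast
      then show ?thesis using True by (simp add: \<theta>_def subst_restrict_def ground_subst_id)
    next
      case False
      then have "x \<in> V" using \<open>x \<in> V \<or> x \<in> W\<close> by blast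
      then show ?thesis using False by (simp add: \<theta>_def Sig' V_def subst_restrict_def)
    qed
  qed
  have KT: "\<And>u. vars_term u \<subseteq> V \<union> W \<Longrightarrow> u \<cdot> \<theta> \<cdot> \<sigma>' = u \<cdot> \<sigma>"
    unfolding subst_comp by (rule subst_agree) (use K in blast)
  have rW: "vars_term (rhs \<rho>) \<subseteq> W" using V_rhs[of _ \<rho>] unfolding W_def V_def vars_terms_def by auto
  have r\<theta>: "rhs \<rho> \<cdot> \<theta> = rhs \<rho> \<cdot> \<sigma>"
    by (rule subst_agree) (use rW in \<open>auto simp: \<theta>_def subst_restrict_def\<close>)
  have fVW: "\<And>i. i < length (conds \<rho>) \<Longrightarrow> vars_term (fst (conds \<rho> ! i)) \<subseteq> V \<union> W"
    unfolding W_def vars_terms_def by auto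
  have sVW: "\<And>i. i < length (conds \<rho>) \<Longrightarrow> vars_term (snd (conds \<rho> ! i)) \<subseteq> V \<union> W"
    using V_snd[of _ \<rho>] unfolding W_def V_def by auto
  have lVW: "vars_term (lhs \<rho>) \<subseteq> V \<union> W"
  proof
    fix x assume x: "x \<in> vars_term (lhs \<rho>)"
    show "x \<in> V \<union> W"
    proof (cases "x \<in> V")
      case False
      then show ?thesis using V_lhs[OF x] sVW unfolding W_def V_def by blast
    qed simp
  qed
  have conv: "(fwd R k)\<^sup>* = ((bwd R k)\<^sup>*)\<inverse>" unfolding IH by (rule rtrancl_converse)
  have C2: "\<forall>i < length (conds \<rho>).
           ((snd (conds \<rho> ! i) \<cdot> \<theta> \<cdot> \<sigma>', \<pi>s ! i), (fst (conds \<rho> ! i) \<cdot> \<theta> \<cdot> \<sigma>', [])) \<in> (bwd R k)\<^sup>*"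
    using C conv KT fVW sVW by auto
  have sEq: "s = replace_at t p (lhs \<rho> \<cdot> \<theta> \<cdot> \<sigma>')"
    using KT[OF lVW] T replace_replace[OF P] replace_subt[OF P] L by simp
  have "\<exists>\<rho> \<theta>. (\<beta>, \<rho>) \<in> R \<and> length \<pi>s = length (conds \<rho>) \<and>
        ground_subst \<theta> \<and>
        subst_dom \<theta> = vars_terms (rhs \<rho> # map fst (conds \<rho>)) - subst_dom \<sigma>' \<and>
        p \<in> poss t \<and> subt_at t p = rhs \<rho> \<cdot> \<theta> \<and>
        (\<forall>i < length (conds \<rho>).
           ((snd (conds \<rho> ! i) \<cdot> \<theta> \<cdot> \<sigma>', \<pi>s ! i), (fst (conds \<rho> ! i) \<cdot> \<theta> \<cdot> \<sigma>', [])) \<in> (bwd R k)\<^sup>*) \<and>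
        s = replace_at t p (lhs \<rho> \<cdot> \<theta> \<cdot> \<sigma>')"
    apply (rule exI[of _ \<rho>], rule exI[of _ \<theta>])
    using R len g\<theta> dom\<theta> dom' pt rt r\<theta> C2 sEq unfolding W_def V_def by simp
  then show ?thesis using S1 S2 unfolding \<pi>2 bwd.simps mem_Collect_eq
    apply -
    apply (rule exI)+
    apply (rule conjI, rule refl)
    apply (rule conjI, assumption)+
    apply assumption
    done
qed


lemma bwd_fwd:
  assumes D: "dctrs R" and IH: "fwd R k = (bwd R k)\<inverse>"
  and B: "((t,\<pi>2),(s,\<pi>)) \<in> bwd R (Suc k)"
  shows "((s,\<pi>),(t,\<pi>2)) \<in> fwd R (Suc k)"
proof -
  from B obtain \<beta> p \<sigma>' \<pi>s \<rho> \<theta> where \<pi>2: "\<pi>2 = TT \<beta> p \<sigma>' \<pi>s # \<pi>" and S1: "safe_pair R (s,\<pi>)"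
    and S2: "safe_pair R (t, TT \<beta> p \<sigma>' \<pi>s # \<pi>)" and R: "(\<beta>,\<rho>) \<in> R"
    and len: "length \<pi>s = length (conds \<rho>)" and G\<theta>: "ground_subst \<theta>"
    and dom\<theta>: "subst_dom \<theta> = vars_terms (rhs \<rho> # map fst (conds \<rho>)) - subst_dom \<sigma>'"
    and pt: "p \<in> poss t" and rt: "subt_at t p = rhs \<rho> \<cdot> \<theta>"
    and C: "\<forall>i < length (conds \<rho>).
           ((snd (conds \<rho> ! i) \<cdot> \<theta> \<cdot> \<sigma>', \<pi>s ! i), (fst (conds \<rho> ! i) \<cdot> \<theta> \<cdot> \<sigma>', [])) \<in> (bwd R k)\<^sup>*"
    and sEq: "s = replace_at t p (lhs \<rho> \<cdot> \<theta> \<cdot> \<sigma>')"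
    by auto
  have dom': "subst_dom \<sigma>' = V_rule \<rho>" and G': "ground_subst \<sigma>'" using safe_dom[OF D S2 R] by simp_all
  define \<sigma> where "\<sigma> = (\<lambda>x. \<theta> x \<cdot> \<sigma>')"
  have gt: "ground t" using S2 by (simp add: safe_pair_def)
  have G: "ground_subst \<sigma>"
    unfolding ground_subst_def
  proof
    fix x assume x: "x \<in> subst_dom \<sigma>"
    show "ground (\<sigma> x)"
    proof (cases "\<theta> x = Var x")
      case True
      then have "\<sigma>' x \<noteq> Var x" using x by (simp add: \<sigma>_def subst_dom_def)
      then show ?thesis using G' True by (simp add: \<sigma>_def subst_dom_def ground_subst_def)
    next
      case False
      then have "ground (\<theta> x)" using G\<theta> by (simp add: subst_dom_def ground_subst_def)
      then show ?thesis by (simp add: \<sigma>_def ground_subst_id)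
    qed
  qed
  have P: "p \<in> poss s" using sEq pt poss_replace by blast
  have L: "subt_at s p = lhs \<rho> \<cdot> \<sigma>" using sEq pt subt_replace by (simp add: \<sigma>_def subst_comp)
  have conv: "(bwd R k)\<^sup>* = ((fwd R k)\<^sup>*)\<inverse>" unfolding IH rtrancl_converse by simp
  have C2: "\<forall>i < length (conds \<rho>).
           ((fst (conds \<rho> ! i) \<cdot> \<sigma>, []), (snd (conds \<rho> ! i) \<cdot> \<sigma>, \<pi>s ! i)) \<in> (fwd R k)\<^sup>*"
    using C conv by (simp add: \<sigma>_def subst_comp)
  have "ground (rhs \<rho> \<cdot> \<theta>)" using ground_subt[OF gt pt] rt by simp
  then have r\<sigma>: "rhs \<rho> \<cdot> \<sigma> = subt_at t p" using rt by (simp add: \<sigma>_def flip: subst_comp add: ground_subst_id)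
  have T: "t = replace_at s p (rhs \<rho> \<cdot> \<sigma>)"
    using sEq r\<sigma> replace_replace[OF pt] replace_subt[OF pt] by simp
  have Sig': "\<sigma>' = subst_restrict \<sigma> (V_rule \<rho>)"
  proof
    fix x show "\<sigma>' x = subst_restrict \<sigma> (V_rule \<rho>) x"
    proof (cases "x \<in> V_rule \<rho>")
      case True
      then have "\<theta> x = Var x" using dom\<theta> dom' by (auto simp: subst_dom_def)
      then show ?thesis using True by (simp add: subst_restrict_def \<sigma>_def)
    next
      case False
      then show ?thesis using dom' by (auto simp: subst_restrict_def subst_dom_def)
    qed
  qed
  have "\<exists>\<rho> \<sigma>. (\<beta>, \<rho>) \<in> R \<and> p \<in> poss s \<and> ground_subst \<sigma> \<and>
        subt_at s p = lhs \<rho> \<cdot> \<sigma> \<and>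
        length \<pi>s = length (conds \<rho>) \<and>
        (\<forall>i < length (conds \<rho>).
           ((fst (conds \<rho> ! i) \<cdot> \<sigma>, []), (snd (conds \<rho> ! i) \<cdot> \<sigma>, \<pi>s ! i)) \<in> (fwd R k)\<^sup>*) \<and>
        t = replace_at s p (rhs \<rho> \<cdot> \<sigma>) \<and>
        \<sigma>' = subst_restrict \<sigma> (V_rule \<rho>)"
    apply (rule exI[of _ \<rho>], rule exI[of _ \<sigma>])
    using R P G L len C2 T Sig' by simp
  then show ?thesis using S1 S2 unfolding \<pi>2 fwd.simps mem_Collect_eq
    apply -
    apply (rule exI)+
    apply (rule conjI, rule refl)
    apply (rule conjI, assumption)+
    apply assumption
    done
qed

lemma fwd_eq: "dctrs R \<Longrightarrow> fwd R k = (bwd R k)\<inverse>"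
proof (induction k)
  case 0 then show ?case by simp
next
  case (Suc k)
  show ?case
  proof (intro equalityI subrelI)
    fix a b assume "(a,b) \<in> fwd R (Suc k)"
    moreover obtain a1 a2 b1 b2 where "a = (a1,a2)" "b = (b1,b2)" by (cases a, cases b)
    ultimately show "(a,b) \<in> (bwd R (Suc k))\<inverse>"
      using fwd_bwd[OF Suc.prems Suc.IH[OF Suc.prems], of a1 a2 b1 b2] by (simp del: fwd.simps bwd.simps)
  next
    fix a b assume "(a,b) \<in> (bwd R (Suc k))\<inverse>"
    moreover obtain a1 a2 b1 b2 where "a = (a1,a2)" "b = (b1,b2)" by (cases a, cases b)
    ultimately show "(a,b) \<in> fwd R (Suc k)"
      using bwd_fwd[OF Suc.prems Suc.IH[OF Suc.prems], of b1 b2 a1 a2] by (simp del: fwd.simps bwd.simps)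
  qed
qed

theorem mainTheorem10:
  fixes R :: "('l \<times> ('f, 'v) crule) set"
    and s t :: "('f, 'v) term" and \<pi> \<pi>' :: "('l, 'f, 'v) trace"
    and k m :: nat
  assumes "dctrs R"
    and "safe_pair R (s, \<pi>)"
    and "safe_pair R (t, \<pi>')"
  shows "((s, \<pi>), (t, \<pi>')) \<in> fwd R k ^^ m \<longleftrightarrow> ((t, \<pi>'), (s, \<pi>)) \<in> bwd R k ^^ m"
  unfolding fwd_eq[OF assms(1), of k] by (rule relpow_conv)

end
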